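(* Let $m,n$ be natural numbers with $m>2$, $n>1$ and $n\ge m-1$, and let $\mathcal X$ be a semigroup variety with $\mathcal X\subseteq\mathcal D_m$. Then $\mathcal A_n\vee\mathcal X=\mathcal A_n\vee\operatorname{ZR}(\mathcal X)$.
   Context: $\operatorname{var}\Sigma$ denotes the semigroup variety defined by identities $\Sigma$. For a word $w$ and a letter $x$ not occurring in $w$, the symbolic identity $w=0$ stands for the pair $wx=xw=w$. $\mathcal A_n=\operatorname{var}\{x^ny=y,\ xy=yx\}$, $\mathcal D_m=\operatorname{var}\{x^m=0,\ xy=yx\}$. $\mathcal{COM}$ is the variety of all commutative semigroups. Identities of the form $w=0$ are called 0-reduced; a commutative variety is 0-reduced in $\mathbf{Com}$ if it is defined within $\mathcal{COM}$ by 0-reduced identities only. For a commutative nil-variety $\mathcal X$, $\operatorname{ZR}(\mathcal X)$ is the least variety 0-reduced in $\mathbf{Com}$ containing $\mathcal X$, i.e. the variety defined within $\mathcal{COM}$ by all 0-reduced identities holding in $\mathcal X$. *)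

theory Defs
  imports Main
begin

text \<open>Semigroup words over the countable alphabet of letters nat: nonempty lists
  (the free semigroup; associativity is built in).
  A semigroup variety is represented by its equational theory (a fully invariant
  congruence on the free semigroup); by Birkhoff's theorem this is an
  order-reversing bijection, so inclusion of varieties is reverse inclusion of
  theories and the join of varieties corresponds to intersection of theories.\<close>

type_synonym word = "nat list"
type_synonym ident = "word \<times> word"

definition subst :: "(nat \<Rightarrow> word) \<Rightarrow> word \<Rightarrow> word" where
  "subst \<sigma> w = concat (map \<sigma> w)"

text \<open>Equational (Birkhoff) closure: the set of all identities derivable from Sigma,
  i.e. the equational theory of the variety var Sigma.\<close>
inductive_set eq_closure :: "ident set \<Rightarrow> ident set" for \<Sigma> :: "ident set" where
  base: "(u, v) \<in> \<Sigma> \<Longrightarrow> (u, v) \<in> eq_closure \<Sigma>"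
| refl: "w \<noteq> [] \<Longrightarrow> (w, w) \<in> eq_closure \<Sigma>"
| sym: "(u, v) \<in> eq_closure \<Sigma> \<Longrightarrow> (v, u) \<in> eq_closure \<Sigma>"
| trans: "(u, v) \<in> eq_closure \<Sigma> \<Longrightarrow> (v, w) \<in> eq_closure \<Sigma> \<Longrightarrow> (u, w) \<in> eq_closure \<Sigma>"
| mult: "(u, v) \<in> eq_closure \<Sigma> \<Longrightarrow> (u', v') \<in> eq_closure \<Sigma> \<Longrightarrow> (u @ u', v @ v') \<in> eq_closure \<Sigma>"
| substI: "(u, v) \<in> eq_closure \<Sigma> \<Longrightarrow> (\<forall>i. \<sigma> i \<noteq> []) \<Longrightarrow> (subst \<sigma> u, subst \<sigma> v) \<in> eq_closure \<Sigma>"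

definition equational_theory :: "ident set \<Rightarrow> bool" where
  "equational_theory E \<longleftrightarrow> E \<subseteq> {(u, v). u \<noteq> [] \<and> v \<noteq> []} \<and> eq_closure E = E"

abbreviation Th_var :: "ident set \<Rightarrow> ident set" where
  "Th_var \<Sigma> \<equiv> eq_closure \<Sigma>"

text \<open>Letters x = 0, y = 1.\<close>
definition comm_id :: ident where
  "comm_id = ([0, 1], [1, 0])"

text \<open>The symbolic identity w = 0 (with a letter x not in w) stands for wx = w and xw = w.\<close>
definition zero_ids :: "word \<Rightarrow> nat \<Rightarrow> ident set" where
  "zero_ids w x = {(w @ [x], w), (x # w, w)}"

definition Th_A :: "nat \<Rightarrow> ident set" where
  "Th_A n = Th_var {(replicate n 0 @ [1], [1]), comm_id}"

definition Th_D :: "nat \<Rightarrow> ident set" where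
  "Th_D m = Th_var ({comm_id} \<union> zero_ids (replicate m 0) 1)"

definition var_le :: "ident set \<Rightarrow> ident set \<Rightarrow> bool" where
  "var_le E1 E2 \<longleftrightarrow> E2 \<subseteq> E1"

definition var_join :: "ident set \<Rightarrow> ident set \<Rightarrow> ident set" where
  "var_join E1 E2 = E1 \<inter> E2"

text \<open>ZR(X): the variety defined within COM by all 0-reduced identities holding in X.\<close>
definition Th_ZR :: "ident set \<Rightarrow> ident set" where
  "Th_ZR E = Th_var ({comm_id} \<union>
      \<Union>{zero_ids w x | w x. w \<noteq> [] \<and> x \<notin> set w \<and> zero_ids w x \<subseteq> E})"

end

theory Submission
  imports Defs "HOL-Library.Multiset"
begin

lemma subst_Nil[simp]: "subst \<sigma> [] = []" by (simp add: subst_def)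
lemma subst_Cons[simp]: "subst \<sigma> (a # w) = \<sigma> a @ subst \<sigma> w" by (simp add: subst_def)
lemma subst_append[simp]: "subst \<sigma> (u @ w) = subst \<sigma> u @ subst \<sigma> w" by (simp add: subst_def)
lemma subst_replicate[simp]: "subst \<sigma> (replicate k a) = concat (replicate k (\<sigma> a))"
  by (induction k) auto

lemma subst_id: "(\<forall>i\<in>set w. \<sigma> i = [i]) \<Longrightarrow> subst \<sigma> w = w"
  by (induction w) auto

lemma sum_subst: "sum_list (map f (subst \<sigma> w)) = sum_list (map (\<lambda>i. sum_list (map f (\<sigma> i))) w)"
  by (induction w) auto

lemma A_inv:
  assumes "(u, v) \<in> eq_closure {(replicate n 0 @ [1], [1]), comm_id}"
  shows "\<forall>f::nat\<Rightarrow>int. int n dvd (sum_list (map f u) - sum_list (map f v))"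
  using assms
proof (induction rule: eq_closure.induct)
  case (base u v)
  then show ?case by (auto simp: comm_id_def map_replicate sum_list_replicate)
next
  case (refl w)
  then show ?case by simp
next
  case (sym u v)
  then show ?case by (metis dvd_minus_iff minus_diff_eq)
next
  case (trans u v w)
  show ?case
  proof
    fix f :: "nat \<Rightarrow> int"
    have "sum_list (map f u) - sum_list (map f w) = (sum_list (map f u) - sum_list (map f v)) + (sum_list (map f v) - sum_list (map f w))" by simp
    then show "int n dvd (sum_list (map f u) - sum_list (map f w))" using trans.IH by (metis dvd_add)
  qed
next
  case (mult u v u' v')
  show ?case
  proof
    fix f :: "nat \<Rightarrow> int"
    have "sum_list (map f (u@u')) - sum_list (map f (v@v')) = (sum_list (map f u) - sum_list (map f v)) + (sum_list (map f u') - sum_list (map f v'))" by simp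
    then show "int n dvd (sum_list (map f (u@u')) - sum_list (map f (v@v')))" using mult.IH by (metis dvd_add)
  qed
next
  case (substI u v \<sigma>)
  show ?case
  proof
    fix f :: "nat \<Rightarrow> int"
    show "int n dvd (sum_list (map f (subst \<sigma> u)) - sum_list (map f (subst \<sigma> v)))"
      using substI.IH[rule_format, of "\<lambda>i. sum_list (map f (\<sigma> i))"] by (simp add: sum_subst)
  qed
qed

lemma cnt_sum: "sum_list (map (\<lambda>y. if y = x then 1 else 0) w) = (int (count (mset w) x) :: int)"
  by (induction w) auto

lemma A_cnt:
  assumes "(u, v) \<in> Th_A n"
  shows "int n dvd (int (count (mset u) x) - int (count (mset v) x))"
  using A_inv[OF assms[unfolded Th_A_def], rule_format, of "\<lambda>y. if y = x then 1 else 0"]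
  by (simp add: cnt_sum)


lemma comm_gen:
  assumes "comm_id \<in> S" "u \<noteq> []" "v \<noteq> []"
  shows "(u @ v, v @ u) \<in> eq_closure S"
proof -
  define \<sigma> where "\<sigma> = (\<lambda>i::nat. if i = 0 then u else if i = 1 then v else [0::nat])"
  have "([0,1],[1,0]) \<in> eq_closure S" using assms(1) by (auto simp: comm_id_def intro: eq_closure.base)
  then have "(subst \<sigma> [0,1], subst \<sigma> [1,0]) \<in> eq_closure S"
    by (rule eq_closure.substI) (use assms in \<open>auto simp: \<sigma>_def\<close>)
  then show ?thesis by (simp add: \<sigma>_def)
qed

lemma perm_eq:
  assumes "comm_id \<in> S"
  shows "mset u = mset v \<Longrightarrow> u \<noteq> [] \<Longrightarrow> (u, v) \<in> eq_closure S"
proof (induction u arbitrary: v)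
  case Nil
  then show ?case by simp
next
  case (Cons a u')
  have "a \<in> set v" using Cons.prems(1) by (metis list.set_intros(1) set_mset_mset)
  then obtain v1 v2 where v: "v = v1 @ a # v2" by (meson split_list)
  have m: "mset u' = mset (v1 @ v2)" using Cons.prems(1) v by simp
  show ?case
  proof (cases "u' = []")
    case True
    then have "v1 @ v2 = []" using m by (metis mset_zero_iff)
    then show ?thesis using v True by (auto intro: eq_closure.refl)
  next
    case False
    have ih: "(u', v1 @ v2) \<in> eq_closure S" using Cons.IH[OF m False] .
    have s1: "(a # u', a # (v1 @ v2)) \<in> eq_closure S"
      using eq_closure.mult[OF eq_closure.refl[of "[a]"] ih] by simp
    have s2: "(a # (v1 @ v2), v1 @ a # v2) \<in> eq_closure S"
    proof (cases "v1 = []")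
      case True
      then show ?thesis by (auto intro: eq_closure.refl)
    next
      case v1: False
      have c: "([a] @ v1, v1 @ [a]) \<in> eq_closure S" using comm_gen[OF assms, of "[a]" v1] v1 by simp
      show ?thesis
      proof (cases "v2 = []")
        case True
        then show ?thesis using c by simp
      next
        case False
        show ?thesis using eq_closure.mult[OF c eq_closure.refl[OF False]] by simp
      qed
    qed
    show ?thesis using eq_closure.trans[OF s1 s2] v by simp
  qed
qed

definition zr :: "ident set \<Rightarrow> word \<Rightarrow> bool" where
  "zr S w \<longleftrightarrow> w \<noteq> [] \<and> (\<forall>t. t \<noteq> [] \<longrightarrow> (w @ t, w) \<in> eq_closure S)"

lemma zr_trans:
  assumes "(u, v) \<in> eq_closure S" "zr S v" "u \<noteq> []"
  shows "zr S u"
  unfolding zr_def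
proof (intro conjI allI impI)
  fix t :: word assume t: "t \<noteq> []"
  have 1: "(u @ t, v @ t) \<in> eq_closure S" using eq_closure.mult[OF assms(1) eq_closure.refl[OF t]] .
  have 2: "(v @ t, v) \<in> eq_closure S" using assms(2) t by (simp add: zr_def)
  show "(u @ t, u) \<in> eq_closure S"
    using eq_closure.trans[OF eq_closure.trans[OF 1 2] eq_closure.sym[OF assms(1)]] .
qed (rule assms(3))

lemma zr_eq:
  assumes "comm_id \<in> S" "zr S u" "zr S v"
  shows "(u, v) \<in> eq_closure S"
proof -
  have u: "u \<noteq> []" and v: "v \<noteq> []" using assms by (auto simp: zr_def)
  have 1: "(u @ v, u) \<in> eq_closure S" using assms(2) v by (simp add: zr_def)
  have 2: "(v @ u, v) \<in> eq_closure S" using assms(3) u by (simp add: zr_def)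
  have 3: "(u @ v, v @ u) \<in> eq_closure S" using comm_gen[OF assms(1) u v] .
  show ?thesis using eq_closure.trans[OF eq_closure.trans[OF eq_closure.sym[OF 1] 3] 2] .
qed

lemma zr_ids:
  assumes "comm_id \<in> S" "zr S w"
  shows "zero_ids w z \<subseteq> eq_closure S"
proof -
  have w: "w \<noteq> []" using assms by (simp add: zr_def)
  have 1: "(w @ [z], w) \<in> eq_closure S" using assms(2) by (simp add: zr_def)
  have 2: "([z] @ w, w @ [z]) \<in> eq_closure S" using comm_gen[OF assms(1), of "[z]" w] w by simp
  have "(z # w, w) \<in> eq_closure S" using eq_closure.trans[OF 2 1] by simp
  then show ?thesis using 1 by (simp add: zero_ids_def)
qed

lemma ids_zr:
  assumes "zero_ids w z \<subseteq> eq_closure S" "z \<notin> set w" "w \<noteq> []"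
  shows "zr S w"
  unfolding zr_def
proof (intro conjI allI impI)
  fix t :: word assume t: "t \<noteq> []"
  define \<sigma> where "\<sigma> = (\<lambda>i. if i = z then t else [i])"
  have "(w @ [z], w) \<in> eq_closure S" using assms(1) by (simp add: zero_ids_def)
  then have "(subst \<sigma> (w @ [z]), subst \<sigma> w) \<in> eq_closure S"
    by (rule eq_closure.substI) (use t in \<open>auto simp: \<sigma>_def\<close>)
  moreover have "subst \<sigma> w = w" using assms(2) by (intro subst_id) (auto simp: \<sigma>_def)
  ultimately show "(w @ t, w) \<in> eq_closure S" by (simp add: \<sigma>_def)
qed (rule assms(3))

lemma zr_rep:
  assumes "comm_id \<in> S" "zero_ids (replicate m 0) 1 \<subseteq> S" "m \<ge> 1" "count (mset w) x \<ge> m"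
  shows "zr S w"
proof -
  have "replicate_mset m x \<subseteq># mset w" using assms(4) by (simp add: subseteq_mset_def)
  moreover obtain r where r: "mset r = mset w - replicate_mset m x" using ex_mset by blast
  ultimately have mw: "mset w = mset (replicate m x @ r)" by (simp add: subset_mset.add_diff_inverse)
  have wne: "w \<noteq> []" using assms(3,4) by auto
  have pw: "(w, replicate m x @ r) \<in> eq_closure S" using perm_eq[OF assms(1) mw wne] .
  have z0: "(replicate m 0 @ [1], replicate m 0) \<in> eq_closure S"
    using assms(2) by (auto simp: zero_ids_def intro: eq_closure.base)
  have zs: "(replicate m x @ s, replicate m x) \<in> eq_closure S" if s: "s \<noteq> []" for s
  proof -
    define \<sigma> where "\<sigma> = (\<lambda>i::nat. if i = 0 then [x] else s)"
    have "(subst \<sigma> (replicate m 0 @ [1]), subst \<sigma> (replicate m 0)) \<in> eq_closure S"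
      using z0 by (rule eq_closure.substI) (use s in \<open>auto simp: \<sigma>_def\<close>)
    moreover have "concat (replicate m [x]) = replicate m x" by (induction m) auto
    ultimately show ?thesis by (simp add: \<sigma>_def)
  qed
  have bk: "(replicate m x, w) \<in> eq_closure S"
  proof (cases "r = []")
    case True
    then show ?thesis using eq_closure.sym[OF pw] by simp
  next
    case False
    show ?thesis using eq_closure.trans[OF eq_closure.sym[OF zs[OF False]] eq_closure.sym[OF pw]] .
  qed
  show ?thesis unfolding zr_def
  proof (intro conjI allI impI)
    fix t :: word assume t: "t \<noteq> []"
    have 1: "(w @ t, replicate m x @ (r @ t)) \<in> eq_closure S"
      using eq_closure.mult[OF pw eq_closure.refl[OF t]] by simp
    have 2: "(replicate m x @ (r @ t), replicate m x) \<in> eq_closure S" using zs t by simp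
    show "(w @ t, w) \<in> eq_closure S" using eq_closure.trans[OF eq_closure.trans[OF 1 2] bk] .
  qed (rule wne)
qed


lemma count_subst_pow:
  "count (mset (subst (\<lambda>i. if i = x then replicate m x else [i]) v)) x = m * count (mset v) x"
  by (induction v) auto

lemma key:
  assumes "comm_id \<in> X" "zero_ids (replicate m 0) 1 \<subseteq> X" "eq_closure X = X"
    "m \<ge> 2" "n \<ge> 1" "n \<ge> m - 1" "(u, v) \<in> X" "u \<noteq> []" "v \<noteq> []"
    "count (mset v) x \<ge> count (mset u) x + n"
  shows "zr X u \<and> zr X v"
proof -
  have uv: "(u, v) \<in> eq_closure X" using assms(3,7) by simp
  show ?thesis
  proof (cases "count (mset u) x \<ge> 1")
    case True
    have "count (mset v) x \<ge> m" using True assms(6,10) by linarith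
    then have zv: "zr X v" using zr_rep[OF assms(1,2)] assms(4) by simp
    then show ?thesis using zr_trans[OF uv zv assms(8)] by simp
  next
    case False
    define \<sigma> where "\<sigma> = (\<lambda>i. if i = x then replicate m x else [i])"
    have "(subst \<sigma> u, subst \<sigma> v) \<in> eq_closure X"
      using uv by (rule eq_closure.substI) (use assms(4) in \<open>auto simp: \<sigma>_def\<close>)
    moreover have "subst \<sigma> u = u" using False by (intro subst_id) (auto simp: \<sigma>_def)
    ultimately have uv': "(u, subst \<sigma> v) \<in> eq_closure X" by simp
    have c: "count (mset (subst \<sigma> v)) x = m * count (mset v) x" unfolding \<sigma>_def by (rule count_subst_pow)
    have "count (mset v) x \<ge> 1" using assms(5,10) by linarith
    then have "count (mset (subst \<sigma> v)) x \<ge> m" using c by simp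
    then have "zr X (subst \<sigma> v)" using zr_rep[OF assms(1,2)] assms(4) by simp
    then have zu: "zr X u" using zr_trans[OF uv' _ assms(8)] by simp
    have zv: "zr X v" using zr_trans[OF eq_closure.sym[OF uv] zu assms(9)] .
    show ?thesis using zu zv by simp
  qed
qed

lemma eqc_mono: "(u, v) \<in> eq_closure S \<Longrightarrow> S \<subseteq> T \<Longrightarrow> (u, v) \<in> eq_closure T"
proof (induction rule: eq_closure.induct)
  case (base u v) then show ?case by (auto intro: eq_closure.base)
next
  case (refl w) then show ?case by (auto intro: eq_closure.refl)
next
  case (sym u v) then show ?case by (auto intro: eq_closure.sym)
next
  case (trans u v w) then show ?case by (auto intro: eq_closure.trans)
next
  case (mult u v u' v') then show ?case by (auto intro: eq_closure.mult)
next
  case (substI u v \<sigma>) then show ?case by (auto intro: eq_closure.substI)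
qed

theorem mainTheorem4:
  fixes m n :: nat and X :: "ident set"
  assumes "m > 2" and "n > 1" and "n \<ge> m - 1"
    and "equational_theory X"
    and "var_le X (Th_D m)"
  shows "var_join (Th_A n) X = var_join (Th_A n) (Th_ZR X)"
proof -
  have Xc: "eq_closure X = X" and Xne: "X \<subseteq> {(u, v). u \<noteq> [] \<and> v \<noteq> []}"
    using assms(4) by (auto simp: equational_theory_def)
  have D: "Th_D m \<subseteq> X" using assms(5) by (simp add: var_le_def)
  have "comm_id \<in> Th_D m" unfolding Th_D_def comm_id_def by (rule eq_closure.base) simp
  then have cX: "comm_id \<in> X" using D by blast
  have "zero_ids (replicate m 0) 1 \<subseteq> Th_D m" unfolding Th_D_def zero_ids_def
    by (auto intro: eq_closure.base)
  then have zX: "zero_ids (replicate m 0) 1 \<subseteq> X" using D by blast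
  define G where "G = ({comm_id} \<union>
      \<Union>{zero_ids w x | w x. w \<noteq> [] \<and> x \<notin> set w \<and> zero_ids w x \<subseteq> X})"
  have ZR: "Th_ZR X = eq_closure G" by (simp add: Th_ZR_def G_def)
  have GX: "G \<subseteq> X" using cX by (auto simp: G_def)
  have cG: "comm_id \<in> G" by (simp add: G_def)
  have sub: "eq_closure G \<subseteq> X"
  proof
    fix p assume "p \<in> eq_closure G"
    then obtain a b where p: "p = (a, b)" "(a, b) \<in> eq_closure G" by (cases p) auto
    show "p \<in> X" using eqc_mono[OF p(2) GX] Xc p(1) by simp
  qed
  have transfer: "zr G w" if zw: "zr X w" for w
  proof -
    have wne: "w \<noteq> []" using zw by (simp add: zr_def)
    have "\<not> (UNIV \<subseteq> set w)" by (metis finite_set infinite_UNIV_nat finite_subset)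
    then obtain z where z: "z \<notin> set w" by blast
    have "zero_ids w z \<subseteq> X" using zr_ids[OF cX zw] Xc by simp
    then have "zero_ids w z \<subseteq> G" using wne z unfolding G_def by blast
    then have "zero_ids w z \<subseteq> eq_closure G" by (auto intro: eq_closure.base)
    then show ?thesis using ids_zr z wne by blast
  qed
  have main: "(u, v) \<in> eq_closure G" if uA: "(u, v) \<in> Th_A n" and uX: "(u, v) \<in> X" for u v
  proof -
    have une: "u \<noteq> []" and vne: "v \<noteq> []" using uX Xne by auto
    show ?thesis
    proof (cases "mset u = mset v")
      case True
      then show ?thesis using perm_eq[OF cG True une] by simp
    next
      case False
      then obtain x where x: "count (mset u) x \<noteq> count (mset v) x" by (meson multiset_eqI)
      define d where "d = int (count (mset u) x) - int (count (mset v) x)"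
      have dd: "int n dvd d" using A_cnt[OF uA] by (simp add: d_def)
      have "d \<noteq> 0" using x by (simp add: d_def)
      then have "\<bar>int n\<bar> \<le> \<bar>d\<bar>" using dd dvd_imp_le_int by blast
      then have "count (mset v) x \<ge> count (mset u) x + n \<or> count (mset u) x \<ge> count (mset v) x + n"
        by (simp add: d_def) linarith
      then have "zr X u \<and> zr X v"
      proof
        assume h: "count (mset v) x \<ge> count (mset u) x + n"
        show ?thesis using key[OF cX zX Xc _ _ assms(3) uX une vne h] assms(1,2) by simp
      next
        assume h: "count (mset u) x \<ge> count (mset v) x + n"
        have vu: "(v, u) \<in> X" using eq_closure.sym[of u v X] uX Xc by simp
        show ?thesis using key[OF cX zX Xc _ _ assms(3) vu vne une h] assms(1,2) by simp
      qed
      then show ?thesis using zr_eq[OF cG] transfer by blast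
    qed
  qed
  show ?thesis unfolding var_join_def ZR using main sub by auto
qed

end
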